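(* Let $S\subseteq M_n$ and $T\subseteq M_{n'}$ be noncommutative graphs. If $S\leq T$ (there is a cohomomorphism from $S$ to $T$), then $\mathcal{H}(S)\leq\mathcal{H}(T)$.
   Context: All scalars are complex; $M_{n'\times n}$ denotes complex $n'\times n$ matrices and $M_n=M_{n\times n}$. A noncommutative graph is a linear subspace $S\subseteq M_n$ that contains $I_n$ and is closed under conjugate transpose. We write $S\leq T$ if there exist $m$ and matrices $E_1,\dots,E_m\in M_{n'\times n}$ with $\sum_{i=1}^m E_i^\dagger E_i=I_n$ (Choi-Kraus operators of a quantum channel $M_n\to M_{n'}$) such that $E_i^\dagger BE_j\in S$ for every $B\in T$ and all $i,j\in[m]$. For a subspace $S\subseteq M_n$, $M_m(S)$ denotes the set of $m\times m$ block matrices with every block in $S$, viewed in $M_{mn}$. The Haemers bound is $\mathcal{H}(S)=\min\{\mathrm{rk}(B):\ m\in\mathbb{N},\ B\in M_m(S),\ \sum_{i=1}^m B_{i,i}=I_n\}$. *)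

theory Defs
  imports "Jordan_Normal_Form.Schur_Decomposition" "Jordan_Normal_Form.DL_Rank"
begin

primrec msum :: "nat \<Rightarrow> nat \<Rightarrow> (nat \<Rightarrow> complex mat) \<Rightarrow> complex mat" where
  "msum n 0 f = 0\<^sub>m n n"
| "msum n (Suc k) f = msum n k f + f k"

definition nc_graph :: "nat \<Rightarrow> complex mat set \<Rightarrow> bool" where
  "nc_graph n S \<longleftrightarrow>
     S \<subseteq> carrier_mat n n \<and> 0\<^sub>m n n \<in> S \<and>
     (\<forall>A\<in>S. \<forall>B\<in>S. A + B \<in> S) \<and> (\<forall>c. \<forall>A\<in>S. c \<cdot>\<^sub>m A \<in> S) \<and>
     1\<^sub>m n \<in> S \<and> (\<forall>A\<in>S. mat_adjoint A \<in> S)"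

definition nc_le :: "nat \<Rightarrow> complex mat set \<Rightarrow> nat \<Rightarrow> complex mat set \<Rightarrow> bool" where
  "nc_le n S n' T \<longleftrightarrow>
     (\<exists>m E. (\<forall>i<m. E i \<in> carrier_mat n' n) \<and>
            msum n m (\<lambda>i. mat_adjoint (E i) * E i) = 1\<^sub>m n \<and>
            (\<forall>B\<in>T. \<forall>i<m. \<forall>j<m. mat_adjoint (E i) * B * E j \<in> S))"

text \<open>The m x m block matrix (in M_(mn)) with n x n blocks blk i j (i, j < m).\<close>
definition block_mat :: "nat \<Rightarrow> nat \<Rightarrow> (nat \<Rightarrow> nat \<Rightarrow> complex mat) \<Rightarrow> complex mat" where
  "block_mat n m blk = mat (m * n) (m * n)
     (\<lambda>(r, c). blk (r div n) (c div n) $$ (r mod n, c mod n))"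

definition haemers :: "nat \<Rightarrow> complex mat set \<Rightarrow> nat" where
  "haemers n S = Inf {vec_space.rank (m * n) (block_mat n m blk) | m blk.
       (\<forall>i<m. \<forall>j<m. blk i j \<in> S) \<and> msum n m (\<lambda>i. blk i i) = 1\<^sub>m n}"

end

theory Submission
  imports Defs
begin


context vec_space begin

lemma rank_mult_le_left:
  assumes P: "P \<in> carrier_mat n r" and Q: "Q \<in> carrier_mat r c"
  shows "rank (P*Q) \<le> rank P"
proof -
  have PQ: "P*Q \<in> carrier_mat n c" using P Q by auto
  have sub: "span (set (cols (P*Q))) \<subseteq> span (set (cols P))"
  proof
    fix y assume "y \<in> span (set (cols (P*Q)))"
    then have "y \<in> col_space (P*Q)" unfolding col_space_def .
    then obtain x where x: "x \<in> carrier_vec c" "y = (P*Q) *\<^sub>v x" "y \<in> carrier_vec n"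
      using col_space_eq[OF PQ] PQ by auto
    have "y = P *\<^sub>v (Q *\<^sub>v x)" using x P Q assoc_mult_mat_vec by metis
    moreover have "Q *\<^sub>v x \<in> carrier_vec r" using Q x by auto
    ultimately have "y \<in> col_space P" using col_space_eq[OF P] P x by auto
    then show "y \<in> span (set (cols P))" unfolding col_space_def .
  qed
  have s1: "VectorSpace.subspace class_ring (span (set (cols P))) V"
    by (metis P cols_dim carrier_matD(1) span_is_subspace)
  have s2: "VectorSpace.subspace class_ring (span (set (cols (P*Q)))) V"
    by (metis PQ cols_dim carrier_matD(1) span_is_subspace)
  have s3: "VectorSpace.subspace class_ring (span (set (cols (P*Q)))) (vs (span (set (cols P))))"
    using nested_subspaces[OF s1 s2 sub] .
  have f1: "vectorspace.fin_dim class_ring (vs (span (set (cols P))))" using fin_dim_span_cols[OF P] .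
  have f2: "vectorspace.fin_dim class_ring (vs (span (set (cols (P*Q)))))" using fin_dim_span_cols[OF PQ] .
  have "vectorspace.dim class_ring ((vs (span (set (cols P))))\<lparr>carrier := span (set (cols (P*Q)))\<rparr>) \<le> vectorspace.dim class_ring (vs (span (set (cols P))))"
    by (rule vectorspace.subspace_dim[OF subspace_is_vs[OF s1] s3 f1]) (use f2 in simp)
  then show ?thesis unfolding rank_def by simp
qed

lemma rank_mult_le_nc:
  assumes P: "P \<in> carrier_mat n r" and Q: "Q \<in> carrier_mat r c"
  shows "rank (P*Q) \<le> r"
  using rank_mult_le_left[OF P Q] rank_le_nc[OF P] by linarith

lemma rank_factor:
  assumes A: "A \<in> carrier_mat n nc"
  shows "\<exists>P Q. P \<in> carrier_mat n (rank A) \<and> Q \<in> carrier_mat (rank A) nc \<and> A = P * Q"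
proof -
  obtain S where max: "maximal S (\<lambda>T. T \<subseteq> set (cols A) \<and> lin_indpt T)"
    using maximal_exists[of "(\<lambda>T. T \<subseteq> set (cols A) \<and> lin_indpt T)" "card (set (cols A))" "{}"]
    by (meson List.finite_set card_mono empty_iff empty_subsetI finite_lin_indpt2 rev_finite_subset)
  have rk: "rank A = card S" using rank_card_indpt[OF A max] .
  have SA: "S \<subseteq> set (cols A)" and li: "lin_indpt S" using max unfolding maximal_def by auto
  have colsC: "set (cols A) \<subseteq> carrier_vec n" using A cols_dim by blast
  have SC: "S \<subseteq> carrier_vec n" using SA colsC by blast
  have finS: "finite S" using SA finite_subset by blast
  obtain ss where ss: "set ss = S" "distinct ss" using finite_distinct_list[OF finS] by blast
  have lss: "length ss = rank A" using ss rk distinct_card by fastforce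
  define P where "P = mat_of_cols n ss"
  have Pc: "P \<in> carrier_mat n (rank A)" unfolding P_def using lss by auto
  have colsP: "cols P = ss" unfolding P_def using ss SC by (intro cols_mat_of_cols) auto
  have inspan: "col A j \<in> span S" if j: "j < nc" for j
  proof (rule ccontr)
    assume nin: "col A j \<notin> span S"
    have cj: "col A j \<in> set (cols A)" using j A by (simp add: cols_def)
    have "col A j \<notin> S" using nin SC span_mem by auto
    have "lin_indpt (S \<union> {col A j})"
      using lin_dep_iff_in_span[OF SC li _ \<open>col A j \<notin> S\<close>] nin cj colsC by blast
    then have "lin_indpt (insert (col A j) S)" by simp
    then have "insert (col A j) S \<subseteq> set (cols A) \<and> lin_indpt (insert (col A j) S)"
      using SA cj by auto
    then show False using max \<open>col A j \<notin> S\<close> unfolding maximal_def by blast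
  qed
  have "\<forall>j<nc. \<exists>x \<in> carrier_vec (rank A). col A j = P *\<^sub>v x"
  proof (intro allI impI)
    fix j assume j: "j < nc"
    have "col A j \<in> col_space P" unfolding col_space_def colsP using inspan[OF j] ss by simp
    then obtain y where y: "y \<in> carrier_vec (rank A)" "P *\<^sub>v y = col A j"
      using col_space_eq[OF Pc] Pc by auto
    show "\<exists>x \<in> carrier_vec (rank A). col A j = P *\<^sub>v x"
      by (rule bexI[of _ y]) (use y in simp_all)
  qed
  then have "\<forall>j. \<exists>y. j < nc \<longrightarrow> y \<in> carrier_vec (rank A) \<and> col A j = P *\<^sub>v y" by blast
  from choice[OF this] obtain x where x: "\<And>j. j < nc \<Longrightarrow> x j \<in> carrier_vec (rank A) \<and> col A j = P *\<^sub>v x j"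
    by blast
  define Q where "Q = mat (rank A) nc (\<lambda>(i,j). x j $ i)"
  have Qc: "Q \<in> carrier_mat (rank A) nc" unfolding Q_def by auto
  have "A = P * Q"
  proof (rule eq_matI)
    fix i j assume i: "i < dim_row (P*Q)" and j: "j < dim_col (P*Q)"
    have i': "i < n" and j': "j < nc" using i j Pc Qc by auto
    have "col Q j = x j" unfolding Q_def using x[OF j'] j' by (auto simp: col_def)
    then have "(P*Q) $$ (i,j) = (P *\<^sub>v x j) $ i" using i' j' Pc Qc
      by (simp add: mult_mat_vec_def)
    also have "\<dots> = col A j $ i" using x[OF j'] by simp
    also have "\<dots> = A $$ (i,j)" using A i' j' by simp
    finally show "A $$ (i,j) = (P*Q) $$ (i,j)" by simp
  qed (use A Pc Qc in auto)
  then show ?thesis using Pc Qc by blast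
qed

end

lemma rank_sandwich:
  assumes B: "B \<in> carrier_mat N N" and X: "X \<in> carrier_mat M N" and Y: "Y \<in> carrier_mat N M"
  shows "vec_space.rank M (X * B * Y) \<le> vec_space.rank N B"
proof -
  obtain P Q where P: "P \<in> carrier_mat N (vec_space.rank N B)" and Q: "Q \<in> carrier_mat (vec_space.rank N B) N"
    and BPQ: "B = P * Q" using vec_space.rank_factor[OF B] by blast
  have "X * B * Y = X * (P * Q) * Y" using BPQ by simp
  also have "X * (P * Q) = X * P * Q" using X P Q by (simp add: assoc_mult_mat)
  also have "X * P * Q * Y = (X * P) * (Q * Y)" using X P Q Y
    by (intro assoc_mult_mat) auto
  finally have "X * B * Y = (X * P) * (Q * Y)" .
  moreover have "X * P \<in> carrier_mat M (vec_space.rank N B)" using X P by auto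
  moreover have "Q * Y \<in> carrier_mat (vec_space.rank N B) M" using Q Y by auto
  ultimately show ?thesis using vec_space.rank_mult_le_nc by simp
qed


definition gblock :: "nat \<Rightarrow> nat \<Rightarrow> nat \<Rightarrow> nat \<Rightarrow> (nat \<Rightarrow> nat \<Rightarrow> complex mat) \<Rightarrow> complex mat" where
  "gblock rn cn R C blk = mat (R * rn) (C * cn)
     (\<lambda>(r, c). blk (r div rn) (c div cn) $$ (r mod rn, c mod cn))"

lemma block_mat_gblock: "block_mat n m blk = gblock n n m m blk"
  unfolding block_mat_def gblock_def by simp

lemma gblock_carrier[simp]: "gblock rn cn R C blk \<in> carrier_mat (R*rn) (C*cn)"
  unfolding gblock_def by simp

lemma sum_lessThan_add_nat: "(\<Sum>u<(a::nat)+b. f u) = (\<Sum>u<a. f u) + (\<Sum>v<b. f (a+v))"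
  by (induction b) (auto simp: add.assoc)

lemma sum_split_blocks: "(\<Sum>u<(K::nat)*kn. f u) = (\<Sum>l<K. \<Sum>v<kn. f (l*kn+v))"
proof (induction K)
  case 0 then show ?case by simp
next
  case (Suc K)
  have "(\<Sum>u<Suc K*kn. f u) = (\<Sum>u<K*kn+kn. f u)" by (simp add: add.commute)
  also have "\<dots> = (\<Sum>u<K*kn. f u) + (\<Sum>v<kn. f (K*kn+v))" by (rule sum_lessThan_add_nat)
  finally show ?case using Suc by simp
qed

lemma gblock_mult:
  assumes X: "\<And>i l. i < R \<Longrightarrow> l < K \<Longrightarrow> X i l \<in> carrier_mat rn kn"
    and Y: "\<And>l j. l < K \<Longrightarrow> j < C \<Longrightarrow> Y l j \<in> carrier_mat kn cn"
    and Z: "\<And>i j s t. i < R \<Longrightarrow> j < C \<Longrightarrow> s < rn \<Longrightarrow> t < cn \<Longrightarrow>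
              Z i j $$ (s,t) = (\<Sum>l<K. (X i l * Y l j) $$ (s,t))"
  shows "gblock rn kn R K X * gblock kn cn K C Y = gblock rn cn R C Z"
proof (rule eq_matI)
  fix r c assume r: "r < dim_row (gblock rn cn R C Z)" and c: "c < dim_col (gblock rn cn R C Z)"
  have r': "r < R * rn" and c': "c < C * cn" using r c by (auto simp: gblock_def)
  have rn: "rn > 0" and cn: "cn > 0" using r' c' by (auto intro: gr0I)
  have i: "r div rn < R" using r' by (simp add: less_mult_imp_div_less)
  have j: "c div cn < C" using c' by (simp add: less_mult_imp_div_less)
  have s: "r mod rn < rn" and t: "c mod cn < cn" using rn cn by auto
  have "(gblock rn kn R K X * gblock kn cn K C Y) $$ (r,c) =
     (\<Sum>u<K*kn. gblock rn kn R K X $$ (r,u) * gblock kn cn K C Y $$ (u,c))"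
    using r' c' by (simp add: scalar_prod_def lessThan_atLeast0 gblock_def)
  also have "\<dots> = (\<Sum>l<K. \<Sum>v<kn. gblock rn kn R K X $$ (r,l*kn+v) * gblock kn cn K C Y $$ (l*kn+v,c))"
    by (rule sum_split_blocks)
  also have "\<dots> = (\<Sum>l<K. \<Sum>v<kn. X (r div rn) l $$ (r mod rn, v) * Y l (c div cn) $$ (v, c mod cn))"
  proof (rule sum.cong[OF refl], rule sum.cong[OF refl])
    fix l v assume l: "l \<in> {..<K}" and v: "v \<in> {..<kn}"
    have lv: "l*kn+v < K*kn" using l v
      by (metis lessThan_iff add.commute add_less_mono1 less_le_trans mult_Suc mult_le_mono1 Suc_leI)
    have d: "(l*kn+v) div kn = l" and m: "(l*kn+v) mod kn = v" using v by auto
    show "gblock rn kn R K X $$ (r,l*kn+v) * gblock kn cn K C Y $$ (l*kn+v,c) =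
          X (r div rn) l $$ (r mod rn, v) * Y l (c div cn) $$ (v, c mod cn)"
      using r' c' lv d m unfolding gblock_def by simp
  qed
  also have "\<dots> = (\<Sum>l<K. (X (r div rn) l * Y l (c div cn)) $$ (r mod rn, c mod cn))"
  proof (rule sum.cong[OF refl])
    fix l assume l: "l \<in> {..<K}"
    have Xc: "X (r div rn) l \<in> carrier_mat rn kn" using X[OF i] l by auto
    have Yc: "Y l (c div cn) \<in> carrier_mat kn cn" using Y[OF _ j] l by auto
    show "(\<Sum>v<kn. X (r div rn) l $$ (r mod rn, v) * Y l (c div cn) $$ (v, c mod cn)) =
          (X (r div rn) l * Y l (c div cn)) $$ (r mod rn, c mod cn)"
      using Xc Yc s t by (simp add: scalar_prod_def lessThan_atLeast0)
  qed
  also have "\<dots> = Z (r div rn) (c div cn) $$ (r mod rn, c mod cn)"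
    using Z[OF i j s t] by simp
  also have "\<dots> = gblock rn cn R C Z $$ (r,c)" using r' c' unfolding gblock_def by simp
  finally show "(gblock rn kn R K X * gblock kn cn K C Y) $$ (r, c) = gblock rn cn R C Z $$ (r, c)" .
qed (auto simp: gblock_def)

lemma msum_carrier: "(\<And>i. i < k \<Longrightarrow> f i \<in> carrier_mat n n) \<Longrightarrow> msum n k f \<in> carrier_mat n n"
  by (induction k) auto

lemma msum_cong: "(\<And>i. i < k \<Longrightarrow> f i = g i) \<Longrightarrow> msum n k f = msum n k g"
  by (induction k) auto

lemma msum_add:
  assumes "\<And>i. i < a + b \<Longrightarrow> f i \<in> carrier_mat n n"
  shows "msum n (a + b) f = msum n a f + msum n b (\<lambda>v. f (a + v))"
  using assms
proof (induction b)
  case 0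
  then show ?case using msum_carrier[of a f n] by simp
next
  case (Suc b)
  have c1: "msum n a f \<in> carrier_mat n n" using Suc.prems by (intro msum_carrier) auto
  have c2: "msum n b (\<lambda>v. f (a + v)) \<in> carrier_mat n n" using Suc.prems by (intro msum_carrier) auto
  have c3: "f (a+b) \<in> carrier_mat n n" using Suc.prems by auto
  have "msum n (a + Suc b) f = msum n (a+b) f + f (a+b)" by simp
  also have "\<dots> = msum n a f + msum n b (\<lambda>v. f (a + v)) + f (a+b)" using Suc by simp
  also have "\<dots> = msum n a f + (msum n b (\<lambda>v. f (a + v)) + f (a+b))"
    using c1 c2 c3 by (rule assoc_add_mat)
  finally show ?case by simp
qed

lemma msum_blocks:
  assumes "\<And>p. p < m * k \<Longrightarrow> F p \<in> carrier_mat n n"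
  shows "msum n (m * k) F = msum n m (\<lambda>i. msum n k (\<lambda>a. F (i*k + a)))"
  using assms
proof (induction m)
  case 0 then show ?case by simp
next
  case (Suc m)
  have "msum n (Suc m * k) F = msum n (m*k + k) F" by (simp add: add.commute)
  also have "\<dots> = msum n (m*k) F + msum n k (\<lambda>v. F (m*k + v))"
    using Suc.prems by (intro msum_add) (simp add: add.commute)
  also have "msum n (m*k) F = msum n m (\<lambda>i. msum n k (\<lambda>a. F (i*k + a)))"
    using Suc.prems by (intro Suc.IH) (meson less_le_trans mult_le_mono1 le_SucI order_refl)
  finally show ?case by simp
qed

lemma msum_sandwich:
  assumes A: "A \<in> carrier_mat n n'" and C: "C \<in> carrier_mat n' n"
    and g: "\<And>l. l < k \<Longrightarrow> g l \<in> carrier_mat n' n'"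
  shows "A * msum n' k g * C = msum n k (\<lambda>l. A * g l * C)"
  using g
proof (induction k)
  case 0 then show ?case using A C by simp
next
  case (Suc k)
  have M: "msum n' k g \<in> carrier_mat n' n'" using Suc.prems by (intro msum_carrier) auto
  have G: "g k \<in> carrier_mat n' n'" using Suc.prems by auto
  have "A * msum n' (Suc k) g * C = A * (msum n' k g + g k) * C" by simp
  also have "\<dots> = (A * msum n' k g + A * g k) * C" using A M G by (simp add: mult_add_distrib_mat)
  also have "\<dots> = A * msum n' k g * C + A * g k * C"
    using A M G C by (intro add_mult_distrib_mat) auto
  finally show ?case using Suc by simp
qed




lemma adjoint_carrier: "E \<in> carrier_mat a b \<Longrightarrow> mat_adjoint E \<in> carrier_mat b a"
  unfolding mat_adjoint_def by auto

theorem mainTheorem7: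
  fixes S T :: "complex mat set" and n n' :: nat
  assumes "nc_graph n S" and "nc_graph n' T" and "nc_le n S n' T"
  shows "haemers n S \<le> haemers n' T"
proof -
  have Sc: "S \<subseteq> carrier_mat n n" and Tc: "T \<subseteq> carrier_mat n' n'" and T1: "1\<^sub>m n' \<in> T"
    using assms(1,2) unfolding nc_graph_def by auto
  obtain q E where Ec: "\<forall>i<q. E i \<in> carrier_mat n' n"
    and Ek: "msum n q (\<lambda>i. mat_adjoint (E i) * E i) = 1\<^sub>m n"
    and ES: "\<forall>B\<in>T. \<forall>i<q. \<forall>j<q. mat_adjoint (E i) * B * E j \<in> S"
    using assms(3) unfolding nc_le_def by blast
  have Ec': "\<And>i. i < q \<Longrightarrow> E i \<in> carrier_mat n' n" using Ec by auto
  have Ea: "\<And>i. i < q \<Longrightarrow> mat_adjoint (E i) \<in> carrier_mat n n'" using Ec' adjoint_carrier by blast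
  define SetT where "SetT = {vec_space.rank (m * n') (block_mat n' m blk) | m blk.
       (\<forall>i<m. \<forall>j<m. blk i j \<in> T) \<and> msum n' m (\<lambda>i. blk i i) = 1\<^sub>m n'}"
  define SetS where "SetS = {vec_space.rank (m * n) (block_mat n m blk) | m blk.
       (\<forall>i<m. \<forall>j<m. blk i j \<in> S) \<and> msum n m (\<lambda>i. blk i i) = 1\<^sub>m n}"
  have hT: "haemers n' T = Inf SetT" unfolding haemers_def SetT_def ..
  have hS: "haemers n S = Inf SetS" unfolding haemers_def SetS_def ..
  have "vec_space.rank (1 * n') (block_mat n' 1 (\<lambda>_ _. 1\<^sub>m n')) \<in> SetT"
    unfolding SetT_def using T1 by force
  then have "SetT \<noteq> {}" by blast
  then have "Inf SetT \<in> SetT" by (rule Inf_nat_def1)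
  then obtain k blk where bT: "\<forall>i<k. \<forall>j<k. blk i j \<in> T"
    and bsum: "msum n' k (\<lambda>i. blk i i) = 1\<^sub>m n'"
    and rk: "haemers n' T = vec_space.rank (k * n') (block_mat n' k blk)"
    unfolding hT by (auto simp: SetT_def)
  have bc: "\<And>i j. i < k \<Longrightarrow> j < k \<Longrightarrow> blk i j \<in> carrier_mat n' n'" using bT Tc by blast
  define blk' where "blk' p r = mat_adjoint (E (p div k)) * blk (p mod k) (r mod k) * E (r div k)" for p r
  define Xb where "Xb p a = (if a = p mod k then mat_adjoint (E (p div k)) else 0\<^sub>m n n')" for p a
  define Yb where "Yb b r = (if b = r mod k then E (r div k) else 0\<^sub>m n' n)" for b r
  define XB where "XB p b = mat_adjoint (E (p div k)) * blk (p mod k) b" for p b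
  have divk: "p div k < q" and modk: "p mod k < k" if "p < q * k" for p
  proof -
    show "p div k < q" using that by (simp add: less_mult_imp_div_less)
    have "k > 0" using that by (auto intro: gr0I)
    then show "p mod k < k" by simp
  qed
  have Xbc: "Xb p a \<in> carrier_mat n n'" if "p < q * k" "a < k" for p a
    using Ea[OF divk[OF that(1)]] unfolding Xb_def by auto
  have Ybc: "Yb b r \<in> carrier_mat n' n" if "b < k" "r < q * k" for b r
    using Ec'[OF divk[OF that(2)]] unfolding Yb_def by auto
  have XBc: "XB p b \<in> carrier_mat n n'" if "p < q * k" "b < k" for p b
    using Ea[OF divk[OF that(1)]] bc[OF modk[OF that(1)] that(2)] unfolding XB_def by auto
  have step1: "gblock n n' (q*k) k Xb * gblock n' n' k k blk = gblock n n' (q*k) k XB"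
  proof (rule gblock_mult)
    fix p b s t assume p: "p < q*k" and b: "b < k" and s: "s < n" and t: "t < n'"
    have "(\<Sum>l<k. (Xb p l * blk l b) $$ (s,t)) =
          (\<Sum>l<k. if l = p mod k then (XB p b) $$ (s,t) else 0)"
    proof (rule sum.cong[OF refl])
      fix l assume l: "l \<in> {..<k}"
      show "(Xb p l * blk l b) $$ (s,t) = (if l = p mod k then (XB p b) $$ (s,t) else 0)"
        using bc[OF _ b, of l] l s t unfolding Xb_def XB_def by auto
    qed
    also have "\<dots> = XB p b $$ (s,t)" using modk[OF p] by simp
    finally show "XB p b $$ (s,t) = (\<Sum>l<k. (Xb p l * blk l b) $$ (s,t))" by simp
  qed (use Xbc bc in auto)
  have step2: "gblock n n' (q*k) k XB * gblock n' n k (q*k) Yb = gblock n n (q*k) (q*k) blk'"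
  proof (rule gblock_mult)
    fix p r s t assume p: "p < q*k" and r: "r < q*k" and s: "s < n" and t: "t < n"
    have "(\<Sum>l<k. (XB p l * Yb l r) $$ (s,t)) =
          (\<Sum>l<k. if l = r mod k then (blk' p r) $$ (s,t) else 0)"
    proof (rule sum.cong[OF refl])
      fix l assume l: "l \<in> {..<k}"
      show "(XB p l * Yb l r) $$ (s,t) = (if l = r mod k then (blk' p r) $$ (s,t) else 0)"
        using XBc[OF p, of l] l s t unfolding Yb_def XB_def blk'_def
        by (auto simp: right_mult_zero_mat[of _ n n'])
    qed
    also have "\<dots> = blk' p r $$ (s,t)" using modk[OF r] by simp
    finally show "blk' p r $$ (s,t) = (\<Sum>l<k. (XB p l * Yb l r) $$ (s,t))" by simp
  qed (use XBc Ybc in auto)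
  have prod: "gblock n n' (q*k) k Xb * block_mat n' k blk * gblock n' n k (q*k) Yb = block_mat n (q*k) blk'"
    unfolding block_mat_gblock step1 step2 ..
  have rank_le: "vec_space.rank (q*k*n) (block_mat n (q*k) blk') \<le> vec_space.rank (k * n') (block_mat n' k blk)"
    unfolding prod[symmetric] by (rule rank_sandwich) (auto simp: block_mat_gblock)
  have inS: "\<forall>p<q*k. \<forall>r<q*k. blk' p r \<in> S"
    using ES bT divk modk unfolding blk'_def by blast
  have blk'c: "\<And>p. p < q * k \<Longrightarrow> blk' p p \<in> carrier_mat n n"
    using inS Sc by blast
  have "msum n (q*k) (\<lambda>p. blk' p p) = msum n q (\<lambda>i. msum n k (\<lambda>a. blk' (i*k+a) (i*k+a)))"
    by (rule msum_blocks) (use blk'c in auto)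
  also have "\<dots> = msum n q (\<lambda>i. msum n k (\<lambda>a. mat_adjoint (E i) * blk a a * E i))"
  proof (rule msum_cong, rule msum_cong)
    fix i a assume "i < q" "a < k"
    then show "blk' (i*k+a) (i*k+a) = mat_adjoint (E i) * blk a a * E i"
      unfolding blk'_def by simp
  qed
  also have "\<dots> = msum n q (\<lambda>i. mat_adjoint (E i) * msum n' k (\<lambda>a. blk a a) * E i)"
    by (rule msum_cong, rule msum_sandwich[symmetric]) (use Ea Ec' bc in auto)
  also have "\<dots> = msum n q (\<lambda>i. mat_adjoint (E i) * E i)"
  proof (rule msum_cong)
    fix i assume i: "i < q"
    have "mat_adjoint (E i) * 1\<^sub>m n' = mat_adjoint (E i)" using Ea[OF i] by simp
    then show "mat_adjoint (E i) * msum n' k (\<lambda>a. blk a a) * E i = mat_adjoint (E i) * E i"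
      by (simp add: bsum)
  qed
  also have "\<dots> = 1\<^sub>m n" by (rule Ek)
  finally have "msum n (q*k) (\<lambda>p. blk' p p) = 1\<^sub>m n" .
  then have "vec_space.rank (q*k*n) (block_mat n (q*k) blk') \<in> SetS"
    unfolding SetS_def using inS by blast
  then have "haemers n S \<le> vec_space.rank (q*k*n) (block_mat n (q*k) blk')"
    unfolding hS by (rule cInf_lower) simp
  then show ?thesis using rank_le rk by simp
qed

end
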